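(* Assume that $N\le p$. Then $(k[U_N])_{[e-1]}\subset k[U_N]_{<d}\subset(k[U_N])_{[(p-1)(d-1)]}$ provided that $e(N-1)<d$.
   Context: $k$ is an algebraically closed field of characteristic $p>0$; $k[\mathbb G_a]=k[T]$. $U_N\subset GL_N$ is the group of upper triangular unipotent $N\times N$ matrices, $k[U_N]=k[x_{i,j}:1\le i<j\le N]$, and $k[U_N]_{<d}$ is the subspace of polynomials of total degree $<d$ in the $x_{i,j}$. $U_N$ carries the structure of exponential type $\mathcal E_B(t)=\exp_B(t)=\sum_{n=0}^{p-1}(tB)^n/n!$ for strictly upper triangular $B$ with $B^p=0$. $(k[U_N])_{[d]}$ is the set of $f\in k[U_N]$ such that $\exp_B^*(f)\in k[T]$ has degree $\le d$ for all such $B$. *)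

theory Defs
  imports "HOL-Library.Poly_Mapping" "HOL-Computational_Algebra.Polynomial" "Jordan_Normal_Form.Matrix"
begin

text \<open>Polynomials in the variables x_(i,j) are finitely supported maps from monomials
(finitely supported exponent vectors indexed by variable pairs (i,j)) to coefficients.
Indices are 0-based: variable x_(i,j) with i < j < N corresponds to x_(i+1,j+1) in the paper.\<close>

type_synonym 'a mpoly_ij = "((nat \<times> nat) \<Rightarrow>\<^sub>0 nat) \<Rightarrow>\<^sub>0 'a"

definition kU :: "nat \<Rightarrow> 'a::field mpoly_ij set" where
  "kU N = {f. \<forall>m \<in> Poly_Mapping.keys f. \<forall>v \<in> Poly_Mapping.keys m. fst v < snd v \<and> snd v < N}"

definition mon_deg :: "((nat \<times> nat) \<Rightarrow>\<^sub>0 nat) \<Rightarrow> nat" where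
  "mon_deg m = (\<Sum>v\<in>Poly_Mapping.keys m. Poly_Mapping.lookup m v)"

definition kU_lt :: "nat \<Rightarrow> nat \<Rightarrow> 'a::field mpoly_ij set" where
  "kU_lt N d = {f \<in> kU N. \<forall>m \<in> Poly_Mapping.keys f. mon_deg m < d}"

definition strict_upper :: "nat \<Rightarrow> 'a::field mat \<Rightarrow> bool" where
  "strict_upper N B \<longleftrightarrow> B \<in> carrier_mat N N \<and> (\<forall>i<N. \<forall>j<N. j \<le> i \<longrightarrow> B $$ (i,j) = 0)"

definition exp_entry :: "nat \<Rightarrow> 'a::field mat \<Rightarrow> nat \<times> nat \<Rightarrow> 'a poly" where
  "exp_entry p B v = (\<Sum>n<p. Polynomial.monom (((B ^\<^sub>m n) $$ v) / of_nat (fact n)) n)"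

definition exp_pullback :: "nat \<Rightarrow> 'a::field mat \<Rightarrow> 'a mpoly_ij \<Rightarrow> 'a poly" where
  "exp_pullback p B f =
     (\<Sum>m\<in>Poly_Mapping.keys f. Polynomial.smult (Poly_Mapping.lookup f m) (\<Prod>v\<in>Poly_Mapping.keys m. (exp_entry p B v) ^ Poly_Mapping.lookup m v))"

definition kU_filt :: "nat \<Rightarrow> nat \<Rightarrow> nat \<Rightarrow> 'a::field mpoly_ij set" where
  "kU_filt p N d = {f \<in> kU N. \<forall>B. strict_upper N B \<and> B ^\<^sub>m p = 0\<^sub>m N N
        \<longrightarrow> degree (exp_pullback p B f) \<le> d}"

end

theory Submission imports Defs "Jordan_Normal_Form.Char_Poly" begin

lemma mult_entry:
  assumes "A \<in> carrier_mat n n" "B \<in> carrier_mat n n" "i < n" "j < n"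
  shows "(A * B) $$ (i,j) = (\<Sum>k<n. A $$ (i,k) * B $$ (k,j))"
  using assms by (auto simp: scalar_prod_def lessThan_atLeast0 intro!: sum.cong)

lemma strict_pow_zero:
  fixes B :: "'b::semiring_1 mat"
  assumes B: "B \<in> carrier_mat N N" and su: "\<forall>i<N. \<forall>j<N. j \<le> i \<longrightarrow> B $$ (i,j) = 0"
  shows "i < N \<Longrightarrow> j < N \<Longrightarrow> j < i + n \<Longrightarrow> (B ^\<^sub>m n) $$ (i,j) = 0"
proof (induction n arbitrary: j)
  case 0
  then show ?case using B by auto
next
  case (Suc n)
  have "(B ^\<^sub>m Suc n) $$ (i,j) = (B ^\<^sub>m n * B) $$ (i,j)" by simp
  also have "\<dots> = (\<Sum>k<N. (B ^\<^sub>m n) $$ (i,k) * B $$ (k,j))"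
    by (rule mult_entry) (use Suc.prems B in auto)
  also have "\<dots> = 0"
  proof (rule sum.neutral, intro ballI)
    fix k assume k: "k \<in> {..<N}"
    show "(B ^\<^sub>m n) $$ (i,k) * B $$ (k,j) = 0"
    proof (cases "k < i + n")
      case True thus ?thesis using Suc.IH[of k] Suc.prems k by auto
    next
      case False thus ?thesis using su Suc.prems k by auto
    qed
  qed
  finally show ?case .
qed

lemma X_pow_deg:
  fixes c :: "nat \<times> nat \<Rightarrow> nat"
  assumes X: "X = (mat N N (\<lambda>(i,j). if i < j then monom 1 (c (i,j)) else 0) :: 'a::field poly mat)"
    and sup: "\<And>i k j. i < k \<Longrightarrow> k < j \<Longrightarrow> j < N \<Longrightarrow> c (i,k) + c (k,j) < c (i,j)"
    and pos: "\<And>i j. i < j \<Longrightarrow> j < N \<Longrightarrow> c (i,j) > 0"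
  shows "1 \<le> n \<Longrightarrow> i < j \<Longrightarrow> j < N \<Longrightarrow>
     degree ((X ^\<^sub>m n) $$ (i,j)) \<le> c (i,j) \<and> (2 \<le> n \<longrightarrow> degree ((X ^\<^sub>m n) $$ (i,j)) < c (i,j))"
proof (induction n arbitrary: j)
  case 0
  then show ?case by simp
next
  case (Suc n)
  have XC: "X \<in> carrier_mat N N" using X by auto
  have su: "\<forall>i<N. \<forall>j<N. j \<le> i \<longrightarrow> X $$ (i,j) = 0" using X by auto
  show ?case
  proof (cases "n = 0")
    case True
    have "(X ^\<^sub>m Suc n) $$ (i,j) = monom 1 (c (i,j))"
      using True Suc.prems XC X by (auto simp: mult_entry)
    then show ?thesis using True by (simp add: degree_monom_eq)
  next
    case False
    have e: "(X ^\<^sub>m Suc n) $$ (i,j) = (\<Sum>k<N. (X ^\<^sub>m n) $$ (i,k) * X $$ (k,j))"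
      unfolding pow_mat.simps by (rule mult_entry) (use Suc.prems XC in auto)
    have "degree (\<Sum>k<N. (X ^\<^sub>m n) $$ (i,k) * X $$ (k,j)) \<le> c (i,j) - 1"
    proof (rule degree_sum_le[OF finite_lessThan])
      fix k assume k: "k \<in> {..<N}"
      show "degree ((X ^\<^sub>m n) $$ (i,k) * X $$ (k,j)) \<le> c (i,j) - 1"
      proof (cases "i < k \<and> k < j")
        case True
        have "degree ((X ^\<^sub>m n) $$ (i,k) * X $$ (k,j)) \<le> degree ((X ^\<^sub>m n) $$ (i,k)) + degree (X $$ (k,j))"
          by (rule degree_mult_le)
        also have "\<dots> \<le> c (i,k) + c (k,j)"
          using Suc.IH[of k] False True Suc.prems X by (auto simp: degree_monom_eq)
        finally show ?thesis using sup[of i k j] True Suc.prems by linarith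
      next
        case F: False
        have "(X ^\<^sub>m n) $$ (i,k) * X $$ (k,j) = 0"
        proof (cases "k \<le> i")
          case True
          then show ?thesis using strict_pow_zero[OF XC su, of i k n] False Suc.prems k by auto
        next
          case False
          then show ?thesis using F X Suc.prems k by auto
        qed
        then show ?thesis by (metis degree_0 zero_le)
      qed
    qed
    then show ?thesis using e pos[of i j] Suc.prems by auto
  qed
qed

definition wt :: "nat \<Rightarrow> 'a::field poly poly \<Rightarrow> bool" where
  "wt K Q \<longleftrightarrow> (\<forall>a. degree (coeff Q a) \<le> K * a)"

lemma wt_1: "wt K 1"
  by (auto simp: wt_def coeff_1)

lemma wt_mult: assumes "wt K P" "wt K Q" shows "wt K (P * Q)"
  unfolding wt_def
proof
  fix n
  show "degree (coeff (P * Q) n) \<le> K * n"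
    unfolding coeff_mult
  proof (rule degree_sum_le[OF finite_atMost])
    fix i assume i: "i \<in> {..n}"
    have "degree (coeff P i * coeff Q (n - i)) \<le> degree (coeff P i) + degree (coeff Q (n - i))"
      by (rule degree_mult_le)
    also have "\<dots> \<le> K * i + K * (n - i)" using assms unfolding wt_def by (intro add_mono) auto
    also have "\<dots> = K * n" using i by (simp add: add_mult_distrib2[symmetric])
    finally show "degree (coeff P i * coeff Q (n - i)) \<le> K * n" .
  qed
qed

lemma wt_power: "wt K P \<Longrightarrow> wt K (P ^ n)"
  by (induction n) (auto intro: wt_mult wt_1)

lemma wt_prod: "(\<And>x. x \<in> S \<Longrightarrow> wt K (f x)) \<Longrightarrow> wt K (prod f S)"
  by (induction S rule: infinite_finite_induct) (auto intro: wt_mult wt_1)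

lemma wt_0: "wt K 0" by (simp add: wt_def)

lemma wt_add: "wt K P \<Longrightarrow> wt K Q \<Longrightarrow> wt K (P + Q)"
  unfolding wt_def by (auto intro: order.trans[OF degree_add_le_max])

lemma wt_sum: "(\<And>x. x \<in> S \<Longrightarrow> wt K (f x)) \<Longrightarrow> wt K (sum f S)"
  by (induction S rule: infinite_finite_induct) (auto intro: wt_add wt_0)

lemma wt_smult: "wt K Q \<Longrightarrow> wt K (Polynomial.smult [:c:] Q)"
  unfolding wt_def by (auto intro: order.trans[OF degree_smult_le])

lemma digits_unique:
  fixes A B :: "nat \<Rightarrow> nat"
  assumes "\<beta> > 0"
  shows "\<forall>k<M. A k < \<beta> \<Longrightarrow> \<forall>k<M. B k < \<beta> \<Longrightarrow>
    (\<Sum>k<M. A k * \<beta>^k) = (\<Sum>k<M. B k * \<beta>^k) \<Longrightarrow> k < M \<Longrightarrow> A k = B k"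
proof (induction M arbitrary: A B k)
  case 0 then show ?case by simp
next
  case (Suc M)
  have sh: "(\<Sum>k<Suc M. F k * \<beta>^k) = F 0 + \<beta> * (\<Sum>k<M. F (Suc k) * \<beta>^k)" for F :: "nat \<Rightarrow> nat"
  proof -
    have "(\<Sum>k<Suc M. F k * \<beta>^k) = F 0 * \<beta>^0 + (\<Sum>k<M. F (Suc k) * \<beta>^(Suc k))"
      by (rule sum.lessThan_Suc_shift)
    also have "(\<Sum>k<M. F (Suc k) * \<beta>^(Suc k)) = \<beta> * (\<Sum>k<M. F (Suc k) * \<beta>^k)"
      unfolding sum_distrib_left by (rule sum.cong) auto
    finally show ?thesis by simp
  qed
  have eq: "A 0 + \<beta> * (\<Sum>k<M. A (Suc k) * \<beta>^k) = B 0 + \<beta> * (\<Sum>k<M. B (Suc k) * \<beta>^k)"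
    using Suc.prems(3) sh[of A] sh[of B] by simp
  have a0: "A 0 < \<beta>" "B 0 < \<beta>" using Suc.prems by auto
  have "(A 0 + \<beta> * (\<Sum>k<M. A (Suc k) * \<beta>^k)) mod \<beta> = A 0" using a0 by simp
  moreover have "(B 0 + \<beta> * (\<Sum>k<M. B (Suc k) * \<beta>^k)) mod \<beta> = B 0" using a0 by simp
  ultimately have e0: "A 0 = B 0" using eq by metis
  have sums: "(\<Sum>k<M. A (Suc k) * \<beta>^k) = (\<Sum>k<M. B (Suc k) * \<beta>^k)"
    using eq e0 assms by simp
  have rest: "A (Suc k') = B (Suc k')" if "k' < M" for k'
    by (rule Suc.IH[of "\<lambda>k. A (Suc k)" "\<lambda>k. B (Suc k)" k'])
       (use Suc.prems(1,2) that sums in auto)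
  show ?case using e0 rest Suc.prems(4) by (cases k) auto
qed

lemma pow_sum_lt:
  fixes \<beta> :: nat
  assumes "\<beta> \<ge> 2" "a \<noteq> b" "a < s" "b < s"
  shows "\<beta>^a + \<beta>^b < \<beta>^s"
proof -
  have key: "\<beta>^x + \<beta>^y < \<beta>^s" if "x < y" "y < s" for x y
  proof -
    have "\<beta>^x < \<beta>^y" using that assms(1) by (intro power_strict_increasing) auto
    hence "\<beta>^x + \<beta>^y < 2 * \<beta>^y" by simp
    also have "\<dots> \<le> \<beta> * \<beta>^y" using assms(1) by simp
    also have "\<dots> = \<beta>^(Suc y)" by simp
    also have "\<dots> \<le> \<beta>^s" using that assms(1) by (intro power_increasing) auto
    finally show ?thesis .
  qed
  show ?thesis
  proof (cases "a < b")
    case True then show ?thesis using key assms by auto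
  next
    case False then show ?thesis using key[of b a] assms by (simp add: add.commute)
  qed
qed

lemma alg_closed_infinite: "infinite (UNIV :: 'a::alg_closed_field set)"
proof
  assume fin: "finite (UNIV :: 'a set)"
  define q :: "'a poly" where "q = (\<Prod>a\<in>UNIV. [:-a, 1:]) + 1"
  have dp: "degree (\<Prod>a\<in>(UNIV::'a set). [:-a, 1:]) = card (UNIV :: 'a set)"
    by (subst degree_prod_eq_sum_degree) auto
  have "card (UNIV :: 'a set) > 0" using fin by (simp add: card_gt_0_iff)
  then have "degree q > 0" unfolding q_def using dp
    by (subst degree_add_eq_left) auto
  then obtain x where "poly q x = 0" using alg_closed_imp_poly_has_root by blast
  moreover have "poly (\<Prod>a\<in>(UNIV::'a set). [:-a, 1:]) x = 0"
    using fin by (simp add: poly_prod prod_zero_iff[OF fin])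
  ultimately show False unfolding q_def by simp
qed

lemma exists_nonroot: "(q :: 'a::alg_closed_field poly) \<noteq> 0 \<Longrightarrow> \<exists>z. poly q z \<noteq> 0"
  using poly_roots_finite[of q] alg_closed_infinite by (metis (mono_tags) UNIV_I mem_Collect_eq subsetI finite_subset)

definition idx :: "nat \<Rightarrow> nat \<times> nat \<Rightarrow> nat" where
  "idx N v = (snd v - fst v) * N + fst v"

definition inv_idx :: "nat \<Rightarrow> nat \<Rightarrow> nat \<times> nat" where
  "inv_idx N k = (k mod N, k mod N + k div N)"

definition cw :: "nat \<Rightarrow> nat \<Rightarrow> nat \<Rightarrow> nat \<times> nat \<Rightarrow> nat" where
  "cw N W \<beta> v = W * (snd v - fst v) + \<beta> ^ idx N v"

lemma idx_lt: "i < j \<Longrightarrow> j < N \<Longrightarrow> idx N (i,j) < N * N"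
proof -
  assume a: "i < j" "j < N"
  have "(j - i) * N + i < (j - i) * N + N" using a by simp
  also have "\<dots> = (j - i + 1) * N" by simp
  also have "\<dots> \<le> N * N" using a by (intro mult_right_mono) auto
  finally show ?thesis by (simp add: idx_def)
qed

lemma inv_idx_idx: "i < j \<Longrightarrow> j < N \<Longrightarrow> inv_idx N (idx N (i,j)) = (i,j)"
  by (simp add: idx_def inv_idx_def)

lemma idx_inv_idx: "0 < N \<Longrightarrow> idx N (inv_idx N k) = k"
  by (simp add: idx_def inv_idx_def)

lemma inj_inv_idx: "0 < N \<Longrightarrow> inj (inv_idx N)"
  by (metis idx_inv_idx injI)

lemma cw_sup:
  assumes "\<beta> \<ge> 2" "i < k" "k < j" "j < N"
  shows "cw N W \<beta> (i,k) + cw N W \<beta> (k,j) < cw N W \<beta> (i,j)"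
proof -
  have W: "W * (k - i) + W * (j - k) = W * (j - i)" using assms
    by (metis add_mult_distrib2 le_add_diff_inverse less_imp_le_nat diff_add_inverse2 add_diff_assoc2 diff_add)
  have a1: "idx N (i,k) < idx N (i,j)" using assms by (simp add: idx_def)
  have "(j - k) * N + k < (j - k) * N + N" using assms by simp
  also have "\<dots> = (j - k + 1) * N" by simp
  also have "\<dots> \<le> (j - i) * N" using assms by (intro mult_right_mono) auto
  finally have a2: "idx N (k,j) < idx N (i,j)" by (simp add: idx_def)
  have a3: "idx N (i,k) \<noteq> idx N (k,j)"
  proof
    assume "idx N (i,k) = idx N (k,j)"
    then have "((k - i) * N + i) mod N = ((j - k) * N + k) mod N" by (simp add: idx_def)
    then have "i = k" using assms by simp
    then show False using assms by simp
  qed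
  have "\<beta> ^ idx N (i,k) + \<beta> ^ idx N (k,j) < \<beta> ^ idx N (i,j)"
    by (rule pow_sum_lt) (use assms a1 a2 a3 in auto)
  then show ?thesis using W unfolding cw_def by simp
qed

definition Rs :: "nat \<Rightarrow> nat \<Rightarrow> (nat \<times> nat \<Rightarrow>\<^sub>0 nat) \<Rightarrow> nat" where
  "Rs N \<beta> m = (\<Sum>v\<in>Poly_Mapping.keys m. Poly_Mapping.lookup m v * \<beta> ^ idx N v)"

definition Gs :: "(nat \<times> nat \<Rightarrow>\<^sub>0 nat) \<Rightarrow> nat" where
  "Gs m = (\<Sum>v\<in>Poly_Mapping.keys m. Poly_Mapping.lookup m v * (snd v - fst v))"

definition wsum :: "nat \<Rightarrow> nat \<Rightarrow> nat \<Rightarrow> (nat \<times> nat \<Rightarrow>\<^sub>0 nat) \<Rightarrow> nat" where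
  "wsum N W \<beta> m = (\<Sum>v\<in>Poly_Mapping.keys m. Poly_Mapping.lookup m v * cw N W \<beta> v)"

lemma wsum_split: "wsum N W \<beta> m = W * Gs m + Rs N \<beta> m"
  unfolding wsum_def Gs_def Rs_def cw_def
  by (simp add: sum_distrib_left sum.distrib algebra_simps)

definition validm :: "nat \<Rightarrow> (nat \<times> nat \<Rightarrow>\<^sub>0 nat) \<Rightarrow> bool" where
  "validm N m \<longleftrightarrow> (\<forall>v\<in>Poly_Mapping.keys m. fst v < snd v \<and> snd v < N)"

lemma Rs_reindex:
  assumes "validm N m" "0 < N"
  shows "Rs N \<beta> m = (\<Sum>k<N*N. Poly_Mapping.lookup m (inv_idx N k) * \<beta> ^ k)"
proof -
  let ?g = "\<lambda>v. Poly_Mapping.lookup m v * \<beta> ^ idx N v"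
  have sub: "Poly_Mapping.keys m \<subseteq> inv_idx N ` {..<N*N}"
  proof
    fix v assume v: "v \<in> Poly_Mapping.keys m"
    obtain i j where ij: "v = (i,j)" by fastforce
    have "i < j" "j < N" using assms v ij unfolding validm_def by auto
    then show "v \<in> inv_idx N ` {..<N*N}"
      using ij idx_lt inv_idx_idx by (metis imageI lessThan_iff)
  qed
  have "Rs N \<beta> m = sum ?g (inv_idx N ` {..<N*N})"
    unfolding Rs_def by (rule sum.mono_neutral_left) (use sub in \<open>auto simp: in_keys_iff\<close>)
  also have "\<dots> = (\<Sum>k<N*N. ?g (inv_idx N k))"
    by (rule sum.reindex[unfolded comp_def]) (use inj_inv_idx[OF assms(2)] in \<open>auto intro: inj_on_subset\<close>)
  also have "\<dots> = (\<Sum>k<N*N. Poly_Mapping.lookup m (inv_idx N k) * \<beta> ^ k)"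
    using idx_inv_idx[OF assms(2)] by simp
  finally show ?thesis .
qed

lemma Rs_inj:
  assumes "validm N m" "validm N m'" "\<forall>v. Poly_Mapping.lookup m v < \<beta>" "\<forall>v. Poly_Mapping.lookup m' v < \<beta>"
    and "Rs N \<beta> m = Rs N \<beta> m'"
  shows "m = m'"
proof (cases "N = 0")
  case True
  have "Poly_Mapping.keys m = {}" using assms(1) True unfolding validm_def by fastforce
  moreover have "Poly_Mapping.keys m' = {}" using assms(2) True unfolding validm_def by fastforce
  ultimately show ?thesis by simp
next
  case False
  then have N: "0 < N" by simp
  have b: "\<beta> > 0" using assms(3) by (metis gr_zeroI not_less0)
  have dig: "Poly_Mapping.lookup m (inv_idx N k) = Poly_Mapping.lookup m' (inv_idx N k)" if "k < N*N" for k
  proof (rule digits_unique[OF b, where M="N*N" and A="\<lambda>k. Poly_Mapping.lookup m (inv_idx N k)" and B="\<lambda>k. Poly_Mapping.lookup m' (inv_idx N k)"])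
    show "\<forall>k<N*N. Poly_Mapping.lookup m (inv_idx N k) < \<beta>" using assms(3) by blast
    show "\<forall>k<N*N. Poly_Mapping.lookup m' (inv_idx N k) < \<beta>" using assms(4) by blast
    show "(\<Sum>k<N*N. Poly_Mapping.lookup m (inv_idx N k) * \<beta>^k) = (\<Sum>k<N*N. Poly_Mapping.lookup m' (inv_idx N k) * \<beta>^k)"
      using assms(5) Rs_reindex[OF assms(1) N] Rs_reindex[OF assms(2) N] by simp
  qed (rule that)
  show ?thesis
  proof (rule poly_mapping_eqI)
    fix v :: "nat \<times> nat"
    obtain i j where ij: "v = (i,j)" by fastforce
    show "Poly_Mapping.lookup m v = Poly_Mapping.lookup m' v"
    proof (cases "i < j \<and> j < N")
      case True
      then show ?thesis using dig[of "idx N (i,j)"] idx_lt inv_idx_idx ij by metis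
    next
      case False
      then have "v \<notin> Poly_Mapping.keys m" "v \<notin> Poly_Mapping.keys m'" using assms(1,2) ij unfolding validm_def by auto
      then show ?thesis by (simp add: in_keys_iff)
    qed
  qed
qed

definition EE :: "nat \<Rightarrow> 'a::field poly mat \<Rightarrow> nat \<times> nat \<Rightarrow> 'a poly poly" where
  "EE p X v = (\<Sum>n<p. monom (Polynomial.smult (inverse (of_nat (fact n))) ((X ^\<^sub>m n) $$ v)) n)"

definition QQ :: "nat \<Rightarrow> 'a::field poly mat \<Rightarrow> 'a mpoly_ij \<Rightarrow> 'a poly poly" where
  "QQ p X f = (\<Sum>m\<in>Poly_Mapping.keys f. Polynomial.smult [:Poly_Mapping.lookup f m:]
        (\<Prod>v\<in>Poly_Mapping.keys m. EE p X v ^ Poly_Mapping.lookup m v))"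

lemma EE_eval:
  fixes X :: "'a::field poly mat"
  assumes X: "X \<in> carrier_mat N N" and v: "fst v < N" "snd v < N"
  shows "map_poly (\<lambda>q. poly q z) (EE p X v) = exp_entry p (map_mat (\<lambda>q. poly q z) X) v"
proof -
  interpret h: map_poly_comm_ring_hom "\<lambda>q::'a poly. poly q z" ..
  have hs: "semiring_hom (\<lambda>q::'a poly. poly q z)" by unfold_locales auto
  have pw: "(map_mat (\<lambda>q. poly q z) X) ^\<^sub>m n = map_mat (\<lambda>q. poly q z) (X ^\<^sub>m n)" for n
    using semiring_hom.mat_hom_pow[OF hs X] by simp
  have ix: "(map_mat (\<lambda>q. poly q z) (X ^\<^sub>m n)) $$ v = poly ((X ^\<^sub>m n) $$ v) z" for n
    using X v by (cases v) auto
  show ?thesis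
    unfolding EE_def exp_entry_def h.hom_sum
    by (rule sum.cong) (auto simp: pw ix divide_inverse mult.commute)
qed

lemma map_poly_smult_eval:
  "map_poly (\<lambda>q. poly q z) (Polynomial.smult [:a:] P) = Polynomial.smult a (map_poly (\<lambda>q. poly q z) P)"
  by (rule poly_eqI) (simp add: coeff_map_poly)

lemma QQ_eval:
  fixes X :: "'a::field poly mat"
  assumes X: "X \<in> carrier_mat N N" and f: "\<forall>m\<in>Poly_Mapping.keys f. validm N m"
  shows "map_poly (\<lambda>q. poly q z) (QQ p X f) = exp_pullback p (map_mat (\<lambda>q. poly q z) X) f"
proof -
  interpret h: map_poly_comm_ring_hom "\<lambda>q::'a poly. poly q z" ..
  show ?thesis
    unfolding QQ_def exp_pullback_def h.hom_sum
  proof (rule sum.cong[OF refl])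
    fix m assume m: "m \<in> Poly_Mapping.keys f"
    show "map_poly (\<lambda>q. poly q z) (Polynomial.smult [:Poly_Mapping.lookup f m:]
        (\<Prod>v\<in>Poly_Mapping.keys m. EE p X v ^ Poly_Mapping.lookup m v)) =
      Polynomial.smult (Poly_Mapping.lookup f m) (\<Prod>v\<in>Poly_Mapping.keys m.
        exp_entry p (map_mat (\<lambda>q. poly q z) X) v ^ Poly_Mapping.lookup m v)"
    proof -
      have e: "\<And>v. v \<in> Poly_Mapping.keys m \<Longrightarrow> map_poly (\<lambda>q. poly q z) (EE p X v) = exp_entry p (map_mat (\<lambda>q. poly q z) X) v"
      proof -
        fix v assume "v \<in> Poly_Mapping.keys m"
        then have "fst v < N" "snd v < N" using f m unfolding validm_def by fastforce+
        then show "map_poly (\<lambda>q. poly q z) (EE p X v) = exp_entry p (map_mat (\<lambda>q. poly q z) X) v"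
          by (rule EE_eval[OF X])
      qed
      show ?thesis by (simp add: map_poly_smult_eval h.hom_prod h.hom_power e cong: prod.cong)
    qed
  qed
qed

lemma coeff_EE: "coeff (EE p X v) a = (if a < p then Polynomial.smult (inverse (of_nat (fact a))) ((X ^\<^sub>m a) $$ v) else 0)"
  unfolding EE_def by (simp add: coeff_sum coeff_monom)

lemma QQ_wt:
  fixes X :: "'a::field poly mat"
  assumes f: "\<forall>m\<in>Poly_Mapping.keys f. validm N m"
    and deg: "\<And>n i j. i < j \<Longrightarrow> j < N \<Longrightarrow> degree ((X ^\<^sub>m n) $$ (i,j)) \<le> K * n"
  shows "wt K (QQ p X f)"
  unfolding QQ_def
proof (intro wt_sum wt_smult wt_prod wt_power)
  fix m v assume m: "m \<in> Poly_Mapping.keys f" and v: "v \<in> Poly_Mapping.keys m"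
  obtain i j where ij0: "v = (i,j)" by fastforce
  have "\<forall>v\<in>Poly_Mapping.keys m. fst v < snd v \<and> snd v < N" using f m unfolding validm_def by blast
  then have "fst v < snd v \<and> snd v < N" using v by blast
  then have ij: "v = (i,j)" "i < j" "j < N" using ij0 by auto
  show "wt K (EE p X v)"
    unfolding wt_def coeff_EE
    using deg[OF ij(2,3)] ij(1) by (auto intro: order.trans[OF degree_smult_le])
qed

definition ev :: "nat \<Rightarrow> 'a::field poly mat \<Rightarrow> nat \<times> nat \<Rightarrow> 'a poly" where
  "ev p X v = (\<Sum>n<p. Polynomial.smult (inverse (of_nat (fact n))) ((X ^\<^sub>m n) $$ v))"

lemma poly_QQ_1:
  "poly (QQ p X f) 1 = (\<Sum>m\<in>Poly_Mapping.keys f. [:Poly_Mapping.lookup f m:] *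
        (\<Prod>v\<in>Poly_Mapping.keys m. ev p X v ^ Poly_Mapping.lookup m v))"
  unfolding QQ_def ev_def EE_def by (simp add: poly_sum poly_prod poly_monom)

lemma ev_props:
  fixes c :: "nat \<times> nat \<Rightarrow> nat"
  assumes X: "X = (mat N N (\<lambda>(i,j). if i < j then monom 1 (c (i,j)) else 0) :: 'a::field poly mat)"
    and sup: "\<And>i k j. i < k \<Longrightarrow> k < j \<Longrightarrow> j < N \<Longrightarrow> c (i,k) + c (k,j) < c (i,j)"
    and pos: "\<And>i j. i < j \<Longrightarrow> j < N \<Longrightarrow> c (i,j) > 0"
    and p: "2 \<le> p" and ij: "i < j" "j < N"
  shows "degree (ev p X (i,j)) = c (i,j) \<and> coeff (ev p X (i,j)) (c (i,j)) = 1"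
proof -
  have XC: "X \<in> carrier_mat N N" using X by auto
  have x0: "(X ^\<^sub>m 0) $$ (i,j) = 0" using ij XC by auto
  have x1: "(X ^\<^sub>m 1) $$ (i,j) = monom 1 (c (i,j))"
    using ij XC X by (auto simp: mult_entry)
  have dg: "degree ((X ^\<^sub>m n) $$ (i,j)) \<le> c (i,j)" for n
  proof (cases n)
    case 0 then show ?thesis using x0 by simp
  next
    case (Suc n') then show ?thesis using X_pow_deg[OF X sup pos, of n i j] ij by auto
  qed
  have c2: "coeff ((X ^\<^sub>m n) $$ (i,j)) (c (i,j)) = 0" if "n \<noteq> 1" for n
  proof (cases "n = 0")
    case True then show ?thesis using x0 by simp
  next
    case False
    then have "degree ((X ^\<^sub>m n) $$ (i,j)) < c (i,j)" using X_pow_deg[OF X sup pos, of n i j] ij that by auto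
    then show ?thesis by (simp add: coeff_eq_0)
  qed
  have "coeff (ev p X (i,j)) (c (i,j)) = (\<Sum>n<p. inverse (of_nat (fact n)) * coeff ((X ^\<^sub>m n) $$ (i,j)) (c (i,j)))"
    unfolding ev_def by (simp add: coeff_sum)
  also have "\<dots> = inverse (of_nat (fact 1)) * coeff ((X ^\<^sub>m 1) $$ (i,j)) (c (i,j))
     + (\<Sum>n\<in>{..<p}-{1}. inverse (of_nat (fact n)) * coeff ((X ^\<^sub>m n) $$ (i,j)) (c (i,j)))"
    by (rule sum.remove) (use p in auto)
  also have "(\<Sum>n\<in>{..<p}-{1}. inverse (of_nat (fact n)) * coeff ((X ^\<^sub>m n) $$ (i,j)) (c (i,j))) = 0"
    by (rule sum.neutral) (use c2 in auto)
  finally have co: "coeff (ev p X (i,j)) (c (i,j)) = 1" using x1 by simp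
  have "degree (ev p X (i,j)) \<le> c (i,j)"
    unfolding ev_def by (rule degree_sum_le) (auto intro: order.trans[OF degree_smult_le] dg)
  moreover have "c (i,j) \<le> degree (ev p X (i,j))" using co by (intro le_degree) simp
  ultimately show ?thesis using co by simp
qed

lemma prod_pow_lead:
  fixes g :: "nat \<times> nat \<Rightarrow> 'a::field poly"
  assumes "\<And>v. v \<in> S \<Longrightarrow> degree (g v) = c v \<and> coeff (g v) (c v) = 1"
  shows "degree (\<Prod>v\<in>S. g v ^ k v) = (\<Sum>v\<in>S. k v * c v) \<and> coeff (\<Prod>v\<in>S. g v ^ k v) (\<Sum>v\<in>S. k v * c v) = 1"
proof -
  have nz: "g v \<noteq> 0" if "v \<in> S" for v using assms[OF that] by auto
  have lc: "lead_coeff (g v) = 1" if "v \<in> S" for v using assms[OF that] by auto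
  have dg: "degree (\<Prod>v\<in>S. g v ^ k v) = (\<Sum>v\<in>S. k v * c v)"
    by (subst degree_prod_eq_sum_degree) (use nz assms in \<open>auto simp: degree_power_eq intro!: sum.cong\<close>)
  have "lead_coeff (\<Prod>v\<in>S. g v ^ k v) = 1"
    by (simp add: lead_coeff_prod lead_coeff_power lc)
  then show ?thesis using dg by simp
qed

lemma strict_upper_pow_p:
  fixes B :: "'b::semiring_1 mat"
  assumes B: "B \<in> carrier_mat N N" and su: "\<forall>i<N. \<forall>j<N. j \<le> i \<longrightarrow> B $$ (i,j) = 0" and Np: "N \<le> p"
  shows "B ^\<^sub>m p = 0\<^sub>m N N"
  by (rule eq_matI) (use B strict_pow_zero[OF B su] Np in auto)

lemma first_incl:
  fixes f :: "'a::alg_closed_field mpoly_ij"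
  assumes ch: "CHAR('a) = p" and p0: "p > 0" and Np: "N \<le> p" and ed: "e * (N-1) < d"
    and ff: "f \<in> kU_filt p N (e-1)"
  shows "f \<in> kU_lt N d"
proof (rule ccontr)
  assume nf: "f \<notin> kU_lt N d"
  have fk: "f \<in> kU N" and fb: "\<And>B. strict_upper N B \<Longrightarrow> B ^\<^sub>m p = 0\<^sub>m N N \<Longrightarrow> degree (exp_pullback p B f) \<le> e-1"
    using ff unfolding kU_filt_def by auto
  have valid: "\<forall>m\<in>Poly_Mapping.keys f. validm N m" using fk unfolding kU_def validm_def by blast
  obtain m0 where m0: "m0 \<in> Poly_Mapping.keys f" "d \<le> mon_deg m0"
    using nf fk unfolding kU_lt_def by (auto simp: not_less)
  have p2: "2 \<le> p"
  proof (rule ccontr)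
    assume "\<not> 2 \<le> p"
    then have "p = 1" using p0 by simp
    then have "(of_nat 1 :: 'a) = 0" using of_nat_CHAR[where 'a='a] ch by simp
    then show False by simp
  qed
  define T where "T = Max (mon_deg ` Poly_Mapping.keys f)"
  have Tb: "mon_deg m \<le> T" if "m \<in> Poly_Mapping.keys f" for m
    unfolding T_def using that by (intro Max_ge) auto
  define \<beta> where "\<beta> = T + 2"
  define R where "R = \<beta> ^ (N*N)"
  define W where "W = (T + e + 1) * R + 1"
  define c where "c = cw N W \<beta>"
  define K where "K = W * (N-1) + R"
  define X :: "'a poly mat" where "X = mat N N (\<lambda>(i,j). if i < j then monom 1 (c (i,j)) else 0)"
  have \<beta>2: "2 \<le> \<beta>" unfolding \<beta>_def by simp
  have R1: "1 \<le> R" unfolding R_def using \<beta>2 by simp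
  have rR: "\<beta> ^ idx N (i,j) \<le> R" if "i < j" "j < N" for i j
    unfolding R_def using idx_lt[OF that] \<beta>2 by (intro power_increasing) auto
  have sup: "c (i,k) + c (k,j) < c (i,j)" if "i < k" "k < j" "j < N" for i k j
    unfolding c_def using cw_sup[OF \<beta>2 that] .
  have pos: "c (i,j) > 0" if "i < j" "j < N" for i j
    unfolding c_def cw_def using \<beta>2 by simp
  have cW: "W \<le> c (i,j)" if "i < j" for i j
  proof -
    have "1 \<le> j - i" using that by simp
    then have "W * 1 \<le> W * (j - i)" by (rule mult_le_mono2)
    then have "W \<le> W * (j - i)" by simp
    then show ?thesis unfolding c_def cw_def fst_conv snd_conv by (rule trans_le_add1)
  qed
  have cK: "c (i,j) \<le> K" if "i < j" "j < N" for i j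
  proof -
    have "W * (j - i) \<le> W * (N - 1)" using that by (intro mult_left_mono) auto
    then show ?thesis unfolding c_def cw_def K_def fst_conv snd_conv using rR[OF that] by (rule add_mono)
  qed
  have XC: "X \<in> carrier_mat N N" unfolding X_def by simp
  have degX: "degree ((X ^\<^sub>m n) $$ (i,j)) \<le> K * n" if "i < j" "j < N" for n i j
  proof (cases n)
    case 0 then show ?thesis using that XC by simp
  next
    case (Suc n')
    have "degree ((X ^\<^sub>m n) $$ (i,j)) \<le> c (i,j)"
      using X_pow_deg[OF X_def sup pos, of n i j] that Suc by auto
    also have "\<dots> \<le> K" using cK[OF that] .
    also have "\<dots> \<le> K * n" using Suc by simp
    finally show ?thesis .
  qed
  define Q where "Q = QQ p X f"
  have wtQ: "wt K Q" unfolding Q_def by (rule QQ_wt[OF valid degX])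
  have lk: "Poly_Mapping.lookup m v < \<beta>" if "m \<in> Poly_Mapping.keys f" for m v
  proof -
    have "Poly_Mapping.lookup m v \<le> mon_deg m"
    proof (cases "v \<in> Poly_Mapping.keys m")
      case True then show ?thesis unfolding mon_deg_def by (intro member_le_sum) auto
    next
      case False then show ?thesis by (simp add: in_keys_iff)
    qed
    then show ?thesis using Tb[OF that] unfolding \<beta>_def by simp
  qed
  have RsW: "Rs N \<beta> m < W" if "m \<in> Poly_Mapping.keys f" for m
  proof -
    have vm: "\<forall>v\<in>Poly_Mapping.keys m. fst v < snd v \<and> snd v < N" using valid that unfolding validm_def by blast
    have "Rs N \<beta> m \<le> (\<Sum>v\<in>Poly_Mapping.keys m. Poly_Mapping.lookup m v * R)"
      unfolding Rs_def
    proof (rule sum_mono)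
      fix v assume "v \<in> Poly_Mapping.keys m"
      then have "fst v < snd v" "snd v < N" using vm by auto
      then have "\<beta> ^ idx N v \<le> R" using rR[of "fst v" "snd v"] by simp
      then show "Poly_Mapping.lookup m v * \<beta> ^ idx N v \<le> Poly_Mapping.lookup m v * R" by simp
    qed
    also have "\<dots> = mon_deg m * R" unfolding mon_deg_def by (simp add: sum_distrib_right)
    also have "\<dots> \<le> T * R" using Tb[OF that] by simp
    also have "\<dots> < W" unfolding W_def by (simp add: algebra_simps)
    finally show ?thesis .
  qed
  have winj: "m = m'" if "m \<in> Poly_Mapping.keys f" "m' \<in> Poly_Mapping.keys f" "wsum N W \<beta> m = wsum N W \<beta> m'" for m m'
  proof (rule Rs_inj)
    show "validm N m" "validm N m'" using valid that by auto
    show "\<forall>v. Poly_Mapping.lookup m v < \<beta>" "\<forall>v. Poly_Mapping.lookup m' v < \<beta>" using lk that by auto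
    have "(W * Gs m + Rs N \<beta> m) mod W = Rs N \<beta> m" using RsW[OF that(1)] by simp
    moreover have "(W * Gs m' + Rs N \<beta> m') mod W = Rs N \<beta> m'" using RsW[OF that(2)] by simp
    ultimately show "Rs N \<beta> m = Rs N \<beta> m'" using that(3) unfolding wsum_split by metis
  qed
  define g where "g m = [:Poly_Mapping.lookup f m:] * (\<Prod>v\<in>Poly_Mapping.keys m. ev p X v ^ Poly_Mapping.lookup m v)" for m
  have gprop: "degree (g m) = wsum N W \<beta> m \<and> coeff (g m) (wsum N W \<beta> m) = Poly_Mapping.lookup f m"
    if m: "m \<in> Poly_Mapping.keys f" for m
  proof -
    have vm: "\<forall>v\<in>Poly_Mapping.keys m. fst v < snd v \<and> snd v < N" using valid m unfolding validm_def by blast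
    have evp: "degree (ev p X v) = c v \<and> coeff (ev p X v) (c v) = 1" if "v \<in> Poly_Mapping.keys m" for v
    proof -
      obtain i j where ij: "v = (i,j)" by fastforce
      have "i < j" "j < N" using vm that ij by auto
      then show ?thesis using ev_props[OF X_def sup pos p2] ij by auto
    qed
    have pp: "degree (\<Prod>v\<in>Poly_Mapping.keys m. ev p X v ^ Poly_Mapping.lookup m v) = wsum N W \<beta> m \<and>
       coeff (\<Prod>v\<in>Poly_Mapping.keys m. ev p X v ^ Poly_Mapping.lookup m v) (wsum N W \<beta> m) = 1"
      unfolding wsum_def c_def[symmetric] by (rule prod_pow_lead) (use evp in auto)
    have nz: "Poly_Mapping.lookup f m \<noteq> 0" using m by (simp add: in_keys_iff)
    have gs: "g m = Polynomial.smult (Poly_Mapping.lookup f m) (\<Prod>v\<in>Poly_Mapping.keys m. ev p X v ^ Poly_Mapping.lookup m v)"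
      unfolding g_def by simp
    show ?thesis using pp nz unfolding gs by simp
  qed
  define M where "M = Max (wsum N W \<beta> ` Poly_Mapping.keys f)"
  have ne: "Poly_Mapping.keys f \<noteq> {}" using m0 by auto
  obtain ms where ms: "ms \<in> Poly_Mapping.keys f" "wsum N W \<beta> ms = M"
  proof -
    have "M \<in> wsum N W \<beta> ` Poly_Mapping.keys f" unfolding M_def by (rule Max_in) (use ne in auto)
    then show ?thesis using that by auto
  qed
  have lessM: "wsum N W \<beta> m < M" if "m \<in> Poly_Mapping.keys f" "m \<noteq> ms" for m
  proof -
    have "wsum N W \<beta> m \<le> M" unfolding M_def using that by (intro Max_ge) auto
    moreover have "wsum N W \<beta> m \<noteq> M" using winj[OF that(1) ms(1)] ms(2) that(2) by auto
    ultimately show ?thesis by simp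
  qed
  have pQ: "poly Q 1 = (\<Sum>m\<in>Poly_Mapping.keys f. g m)"
    unfolding Q_def poly_QQ_1 g_def ..
  have "coeff (poly Q 1) M = (\<Sum>m\<in>Poly_Mapping.keys f. coeff (g m) M)"
    unfolding pQ by (simp add: coeff_sum)
  also have "\<dots> = coeff (g ms) M + (\<Sum>m\<in>Poly_Mapping.keys f - {ms}. coeff (g m) M)"
    by (rule sum.remove) (use ms in auto)
  also have "(\<Sum>m\<in>Poly_Mapping.keys f - {ms}. coeff (g m) M) = 0"
  proof (rule sum.neutral, intro ballI)
    fix m assume "m \<in> Poly_Mapping.keys f - {ms}"
    then have "degree (g m) < M" using gprop lessM by auto
    then show "coeff (g m) M = 0" by (simp add: coeff_eq_0)
  qed
  finally have "coeff (poly Q 1) M = Poly_Mapping.lookup f ms" using gprop[OF ms(1)] ms(2) by simp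
  then have "coeff (poly Q 1) M \<noteq> 0" using ms(1) by (simp add: in_keys_iff)
  then have dQ1: "M \<le> degree (poly Q 1)" by (rule le_degree)
  have "W * mon_deg m0 \<le> wsum N W \<beta> m0"
  proof -
    have vm: "\<forall>v\<in>Poly_Mapping.keys m0. fst v < snd v \<and> snd v < N" using valid m0(1) unfolding validm_def by blast
    have "W * mon_deg m0 = (\<Sum>v\<in>Poly_Mapping.keys m0. Poly_Mapping.lookup m0 v * W)"
      unfolding mon_deg_def by (simp add: sum_distrib_left mult.commute)
    also have "\<dots> \<le> wsum N W \<beta> m0"
      unfolding wsum_def c_def[symmetric]
    proof (rule sum_mono)
      fix v assume "v \<in> Poly_Mapping.keys m0"
      then have "fst v < snd v" using vm by auto
      then have "W \<le> c v" using cW[of "fst v" "snd v"] by simp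
      then show "Poly_Mapping.lookup m0 v * W \<le> Poly_Mapping.lookup m0 v * c v" by simp
    qed
    finally show ?thesis .
  qed
  moreover have "wsum N W \<beta> m0 \<le> M" unfolding M_def using m0(1) by (intro Max_ge) auto
  moreover have "W * d \<le> W * mon_deg m0" using m0(2) by simp
  ultimately have lowb: "W * d \<le> degree (poly Q 1)" using dQ1 by linarith
  show False
  proof (cases "\<exists>a. e - 1 < a \<and> coeff Q a \<noteq> 0")
    case True
    then obtain a where a: "e - 1 < a" "coeff Q a \<noteq> 0" by blast
    obtain z where z: "poly (coeff Q a) z \<noteq> 0" using exists_nonroot[OF a(2)] by blast
    define B where "B = map_mat (\<lambda>q. poly q z) X"
    have BC: "B \<in> carrier_mat N N" unfolding B_def using XC by simp
    have su: "\<forall>i<N. \<forall>j<N. j \<le> i \<longrightarrow> B $$ (i,j) = 0" unfolding B_def X_def by auto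
    have sB: "strict_upper N B" unfolding strict_upper_def using BC su by blast
    have pB: "B ^\<^sub>m p = 0\<^sub>m N N" by (rule strict_upper_pow_p[OF BC su Np])
    have "exp_pullback p B f = map_poly (\<lambda>q. poly q z) Q"
      unfolding B_def Q_def by (rule QQ_eval[OF XC valid, symmetric])
    then have "coeff (exp_pullback p B f) a \<noteq> 0" using z by (simp add: coeff_map_poly)
    then have "a \<le> degree (exp_pullback p B f)" by (rule le_degree)
    then show False using fb[OF sB pB] a(1) by simp
  next
    case False
    have "poly Q 1 = (\<Sum>i\<le>degree Q. coeff Q i * 1 ^ i)" by (rule poly_altdef)
    also have "\<dots> = (\<Sum>i\<le>degree Q. coeff Q i)" by simp
    finally have pe: "poly Q 1 = (\<Sum>i\<le>degree Q. coeff Q i)" .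
    have "degree (poly Q 1) \<le> K * (e - 1)"
      unfolding pe
    proof (rule degree_sum_le[OF finite_atMost])
      fix i assume "i \<in> {..degree Q}"
      show "degree (coeff Q i) \<le> K * (e - 1)"
      proof (cases "i \<le> e - 1")
        case True
        have "degree (coeff Q i) \<le> K * i" using wtQ unfolding wt_def by blast
        also have "\<dots> \<le> K * (e - 1)" using True by simp
        finally show ?thesis .
      next
        case F: False
        then have "coeff Q i = 0" using False by auto
        then show ?thesis by simp
      qed
    qed
    moreover have "K * (e - 1) < W * d"
    proof -
      have "(e - 1) * (N - 1) + 1 \<le> d" using ed by (metis Suc_eq_plus1 Suc_leI diff_le_self le_less_trans mult_le_mono1)
      then have "W * ((e - 1) * (N - 1) + 1) \<le> W * d" by (rule mult_le_mono2)
      moreover have "R * (e - 1) < W" unfolding W_def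
      proof -
        have "e - 1 \<le> T + e + 1" by simp
        then have "R * (e - 1) \<le> R * (T + e + 1)" by (rule mult_le_mono2)
        then have "R * (e - 1) \<le> (T + e + 1) * R" by (simp only: mult.commute)
        then show "R * (e - 1) < (T + e + 1) * R + 1" by simp
      qed
      moreover have "K * (e - 1) = W * ((e - 1) * (N - 1)) + R * (e - 1)"
        unfolding K_def add_mult_distrib by (simp add: mult_ac)
      moreover have "W * ((e - 1) * (N - 1) + 1) = W * ((e - 1) * (N - 1)) + W" by simp
      ultimately show ?thesis by linarith
    qed
    ultimately show False using lowb by simp
  qed
qed

lemma degree_exp_entry: "degree (exp_entry p B v) \<le> p - 1"
  unfolding exp_entry_def
  by (rule degree_sum_le[OF finite_lessThan]) (auto intro: order.trans[OF degree_monom_le])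

lemma second_incl:
  fixes f :: "'a::field mpoly_ij"
  assumes f: "f \<in> kU_lt N d"
  shows "f \<in> kU_filt p N ((p - 1) * (d - 1))"
proof -
  have fk: "f \<in> kU N" and md: "\<And>m. m \<in> Poly_Mapping.keys f \<Longrightarrow> mon_deg m < d"
    using f unfolding kU_lt_def by auto
  have "degree (exp_pullback p B f) \<le> (p - 1) * (d - 1)" for B :: "'a mat"
    unfolding exp_pullback_def
  proof (rule degree_sum_le[OF finite_keys])
    fix m assume m: "m \<in> Poly_Mapping.keys f"
    have "degree (Polynomial.smult (Poly_Mapping.lookup f m)
        (\<Prod>v\<in>Poly_Mapping.keys m. exp_entry p B v ^ Poly_Mapping.lookup m v))
      \<le> degree (\<Prod>v\<in>Poly_Mapping.keys m. exp_entry p B v ^ Poly_Mapping.lookup m v)"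
      by (rule degree_smult_le)
    also have "\<dots> \<le> (\<Sum>v\<in>Poly_Mapping.keys m. degree (exp_entry p B v ^ Poly_Mapping.lookup m v))"
      using degree_prod_sum_le[OF finite_keys] by (simp add: comp_def)
    also have "\<dots> \<le> (\<Sum>v\<in>Poly_Mapping.keys m. Poly_Mapping.lookup m v * (p - 1))"
    proof (rule sum_mono)
      fix v
      have "degree (exp_entry p B v ^ Poly_Mapping.lookup m v) \<le> degree (exp_entry p B v) * Poly_Mapping.lookup m v"
        by (rule degree_power_le)
      also have "\<dots> \<le> (p - 1) * Poly_Mapping.lookup m v"
        using degree_exp_entry by (rule mult_le_mono1)
      finally show "degree (exp_entry p B v ^ Poly_Mapping.lookup m v) \<le> Poly_Mapping.lookup m v * (p - 1)"
        by (simp add: mult.commute)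
    qed
    also have "\<dots> = (p - 1) * mon_deg m" unfolding mon_deg_def sum_distrib_left by (simp add: mult.commute)
    also have "\<dots> \<le> (p - 1) * (d - 1)" using md[OF m] by (intro mult_le_mono2) simp
    finally show "degree (Polynomial.smult (Poly_Mapping.lookup f m)
        (\<Prod>v\<in>Poly_Mapping.keys m. exp_entry p B v ^ Poly_Mapping.lookup m v)) \<le> (p - 1) * (d - 1)" .
  qed
  then show ?thesis using fk unfolding kU_filt_def by auto
qed

theorem proposition3p8:
  fixes p N e d :: nat
  assumes "CHAR('a::alg_closed_field) = p" and "p > 0"
    and "N \<le> p"
    and "e * (N - 1) < d"
  shows "(kU_filt p N (e - 1) :: 'a mpoly_ij set) \<subseteq> kU_lt N d
         \<and> (kU_lt N d :: 'a mpoly_ij set) \<subseteq> kU_filt p N ((p - 1) * (d - 1))"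
  using first_incl[OF assms] second_incl by blast

end
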